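(* Let $\kappa$ be a regular uncountable cardinal. Then there exists a totally disconnected compactum $X$ such that $Nt(X)=\kappa$ and $X$ has a $P_\kappa$-point.
   Context: A compactum is a compact Hausdorff space. Families of open sets are ordered by inclusion; a family is $\mu^{\mathrm{op}}$-like if no member is contained in $\mu$-many members; $Nt(X)$ is the least $\mu\geq\omega$ such that $X$ has a $\mu^{\mathrm{op}}$-like base. A point $p\in X$ is a $P_\kappa$-point if for every family $\mathcal{A}$ of fewer than $\kappa$ neighborhoods of $p$, $p$ lies in the interior of $\bigcap\mathcal{A}$. *)

theory Defs
  imports "HOL-Analysis.Analysis"
begin

unbundle cardinal_syntax

definition compactum :: "'a topology \<Rightarrow> bool" where
  "compactum X \<longleftrightarrow> compact_space X \<and> Hausdorff_space X"

definition totally_disconnected_space :: "'a topology \<Rightarrow> bool" where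
  "totally_disconnected_space X \<longleftrightarrow>
     (\<forall>S. S \<subseteq> topspace X \<and> connectedin X S \<longrightarrow> (\<forall>x\<in>S. \<forall>y\<in>S. x = y))"

definition is_base :: "'a topology \<Rightarrow> 'a set set \<Rightarrow> bool" where
  "is_base X \<B> \<longleftrightarrow> (\<forall>U\<in>\<B>. openin X U) \<and>
     (\<forall>U. openin X U \<longrightarrow> (\<exists>\<U>. \<U> \<subseteq> \<B> \<and> \<Union>\<U> = U))"

text \<open>A family is \<open>\<mu>\<^sup>o\<^sup>p\<close>-like (the cardinal \<open>\<mu>\<close> given as the cardinality of a set M):
  no member is contained in \<open>\<mu>\<close>-many members, i.e. the set of members containing
  any given member has cardinality strictly less than \<open>\<mu>\<close>.\<close>
definition op_like :: "'b set \<Rightarrow> 'a set set \<Rightarrow> bool" where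
  "op_like M \<F> \<longleftrightarrow> (\<forall>U\<in>\<F>. card_of {V\<in>\<F>. U \<subseteq> V} <o card_of M)"

definition has_op_like_base :: "'b set \<Rightarrow> 'a topology \<Rightarrow> bool" where
  "has_op_like_base M X \<longleftrightarrow> (\<exists>\<B>. is_base X \<B> \<and> op_like M \<B>)"

text \<open>\<open>Nt(X) = |K|\<close> for an infinite set K: X has a \<open>|K|\<^sup>o\<^sup>p\<close>-like base, and no
  \<open>\<mu>\<^sup>o\<^sup>p\<close>-like base for any infinite cardinal \<open>\<mu> < |K|\<close> (every such \<open>\<mu>\<close> is the
  cardinality of a subset of K).\<close>
definition Nt_eq :: "'a topology \<Rightarrow> 'k set \<Rightarrow> bool" where
  "Nt_eq X K \<longleftrightarrow> infinite K \<and> has_op_like_base K X \<and>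
     (\<forall>M. M \<subseteq> K \<and> infinite M \<and> |M| <o |K| \<longrightarrow> \<not> has_op_like_base M X)"

definition P_point :: "'k set \<Rightarrow> 'a topology \<Rightarrow> 'a \<Rightarrow> bool" where
  "P_point K X p \<longleftrightarrow> p \<in> topspace X \<and>
     (\<forall>\<A>. |\<A>| <o |K| \<and> (\<forall>N\<in>\<A>. p \<in> X interior_of N) \<longrightarrow> p \<in> X interior_of (\<Inter>\<A>))"

end

theory Submission
  imports Defs
begin

locale kappa =
  fixes r :: "'k rel"
  assumes r_def: "r = |UNIV :: 'k set|"
    and reg: "regularCard r"
    and unc: "\<not> countable (UNIV :: 'k set)"
begin

lemma Card_r: "Card_order r" using r_def card_of_Card_order by simp
lemma WO: "Well_order r" using r_def card_of_Well_order by simp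
lemma wo: "wo_rel r" unfolding wo_rel_def using WO .
lemma Field_r[simp]: "Field r = UNIV" using r_def Field_card_of by simp
lemma inf: "infinite (UNIV::'k set)" using unc countable_finite by blast
lemma total: "(a,b) \<in> r \<or> (b,a) \<in> r" using wo_rel.TOTALS[OF wo] by simp
lemma refl_r[simp]: "(a,a) \<in> r" using wo_rel.REFL[OF wo] by (simp add: refl_on_def)
lemma trans_r: "(a,b)\<in>r \<Longrightarrow> (b,c)\<in>r \<Longrightarrow> (a,c)\<in>r"
  using wo_rel.TRANS[OF wo] unfolding trans_def by blast
lemma antisym_r: "(a,b)\<in>r \<Longrightarrow> (b,a)\<in>r \<Longrightarrow> a = b"
  using wo_rel.ANTISYM[OF wo] unfolding antisym_def by blast

lemma small_bounded:
  assumes "|K| <o r" shows "\<exists>a. \<forall>b\<in>K. (b,a) \<in> r"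
proof -
  have "\<not> cofinal K r"
  proof
    assume "cofinal K r"
    then have "|K| =o r" using reg unfolding regularCard_def by auto
    with assms show False using not_ordLess_ordIso by blast
  qed
  then obtain a where a: "\<forall>b\<in>K. a = b \<or> (a,b) \<notin> r" unfolding cofinal_def by auto
  have "(b,a) \<in> r" if "b \<in> K" for b
    using a that total[of a b] refl_r by auto
  thus ?thesis by blast
qed

lemma finite_small: "finite A \<Longrightarrow> |A| <o r"
proof -
  assume "finite A"
  then show ?thesis using finite_ordLess_infinite[of "|A|" r, OF card_of_Well_order WO] inf by (simp add: Field_card_of)
qed

lemma Un_small: "|A| <o r \<Longrightarrow> |B| <o r \<Longrightarrow> |A \<union> B| <o r"
  using card_of_Un_ordLess_infinite_Field[OF _ Card_r] inf by simp

lemma mono_small: "A \<subseteq> B \<Longrightarrow> |B| <o r \<Longrightarrow> |A| <o r"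
  using card_of_mono1 ordLeq_ordLess_trans by blast

lemma image_small: "|A| <o r \<Longrightarrow> |f ` A| <o r"
  using card_of_image ordLeq_ordLess_trans by blast

definition und :: "'k \<Rightarrow> 'k set" where "und a = {b. (b,a) \<in> r}"

lemma und_small: "|und a| <o r"
proof -
  have "und a = {a} \<union> underS r a" unfolding und_def underS_def by auto
  moreover have "|underS r a| <o r" using card_of_underS[OF Card_r] by simp
  moreover have "|{a}| <o r" using finite_small[of "{a}"] by simp
  ultimately show ?thesis using Un_small by metis
qed

lemma nat_small: "|UNIV::nat set| <o r"
proof -
  have "\<not> r \<le>o |UNIV::nat set|"
  proof
    assume "r \<le>o |UNIV::nat set|"
    then obtain f :: "'k \<Rightarrow> nat" where "inj_on f UNIV" using r_def card_of_ordLeq[of "UNIV::'k set" "UNIV::nat set"] by auto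
    thus False using unc unfolding countable_def by blast
  qed
  thus ?thesis using not_ordLeq_iff_ordLess[OF card_of_Well_order WO] by blast
qed

lemma stab: "stable r" using regularCard_stable[OF Card_r _ reg] inf by simp

lemma Times_small: "|A| <o r \<Longrightarrow> |B| <o r \<Longrightarrow> |A \<times> B| <o r"
  using stable_elim[OF stab, of A "\<lambda>_. B"] by simp

lemma UN_small: "|I| <o r \<Longrightarrow> (\<And>i. i \<in> I \<Longrightarrow> |F i| <o r) \<Longrightarrow> |\<Union>i\<in>I. F i| <o r"
  using stable_UNION[OF stab] by blast

lemma fin_subsets_small:
  assumes "|S| <o r" shows "|{A. finite A \<and> A \<subseteq> S}| <o r"
proof -
  define L where "L n = {xs. length xs = n \<and> set xs \<subseteq> S}" for n
  have Ln: "|L n| <o r" for n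
  proof (induction n)
    case 0
    have "L 0 = {[]}" unfolding L_def by auto
    then show ?case using finite_small[of "{[]}"] by simp
  next
    case (Suc n)
    have "L (Suc n) \<subseteq> (\<lambda>(x,xs). x#xs) ` (S \<times> L n)"
    proof
      fix ys assume "ys \<in> L (Suc n)"
      then obtain x xs where "ys = x # xs" "x \<in> S" "xs \<in> L n" unfolding L_def
        by (cases ys) auto
      then show "ys \<in> (\<lambda>(x,xs). x#xs) ` (S \<times> L n)" by force
    qed
    moreover have "|S \<times> L n| <o r" using Times_small[OF assms Suc] .
    then have "|(\<lambda>(x,xs). x#xs) ` (S \<times> L n)| <o r"
      by (rule image_small)
    ultimately show ?case by (rule mono_small)
  qed
  have "{A. finite A \<and> A \<subseteq> S} \<subseteq> set ` (\<Union>n\<in>UNIV. L n)"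
  proof
    fix A assume "A \<in> {A. finite A \<and> A \<subseteq> S}"
    then obtain xs where "set xs = A" "set xs \<subseteq> S" using finite_list by auto
    then show "A \<in> set ` (\<Union>n\<in>UNIV. L n)" unfolding L_def by auto
  qed
  moreover have "|\<Union>n\<in>UNIV. L n| <o r" using UN_small[OF nat_small] Ln by blast
  then have "|set ` (\<Union>n\<in>UNIV. L n)| <o r" by (rule image_small)
  ultimately show ?thesis by (rule mono_small)
qed

lemma no_max: "\<exists>b. (a,b) \<in> r \<and> b \<noteq> a"
proof -
  have "UNIV \<noteq> und a"
  proof
    assume "UNIV = und a"
    then have "|UNIV::'k set| <o r" using und_small[of a] by simp
    then show False using r_def ordLess_irreflexive by metis
  qed
  then obtain b where b: "(b,a) \<notin> r" unfolding und_def by auto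
  then have "(a,b) \<in> r" using total by blast
  moreover have "b \<noteq> a" using b refl_r by blast
  ultimately show ?thesis by blast
qed


subsection \<open>The space\<close>

definition Z :: "('k \<Rightarrow> bool) topology" where
  "Z = product_topology (\<lambda>_. discrete_topology UNIV) UNIV"
definition Y :: "(('k \<Rightarrow> bool) \<times> ('k \<Rightarrow> bool)) topology" where
  "Y = prod_topology Z Z"
definition dset :: "'k set \<Rightarrow> bool" where
  "dset D \<longleftrightarrow> (\<forall>a b. b \<in> D \<longrightarrow> (a,b) \<in> r \<longrightarrow> a \<in> D)"
definition P :: "'k set set set" where
  "P = {S. \<exists>D E. S = {D,E} \<and> D \<subseteq> E \<and> dset D}"
definition g :: "'k set set \<Rightarrow> ('k \<Rightarrow> bool) \<times> ('k \<Rightarrow> bool)" where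
  "g S = ((\<lambda>a. a \<in> \<Inter>S), (\<lambda>a. a \<in> \<Union>S))"
definition X :: "'k set set topology" where
  "X = pullback_topology P g Y"

lemma topZ[simp]: "topspace Z = UNIV"
  unfolding Z_def by (simp add: PiE_UNIV_domain)
lemma topY[simp]: "topspace Y = UNIV"
  unfolding Y_def by simp
lemma topX[simp]: "topspace X = P"
  unfolding X_def topspace_pullback_topology by simp
lemma openX: "openin X Ow \<longleftrightarrow> (\<exists>V. openin Y V \<and> Ow = g -` V \<inter> P)"
  unfolding X_def openin_pullback_topology by simp

lemma pt_simps[simp]: "D \<subseteq> E \<Longrightarrow> \<Inter>{D,E} = D" "D \<subseteq> E \<Longrightarrow> \<Union>{D,E} = E"
  by auto

lemma ptP: "D \<subseteq> E \<Longrightarrow> dset D \<Longrightarrow> {D,E} \<in> P"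
  unfolding P_def by blast

lemma PD: assumes "S \<in> P" shows "dset (\<Inter>S)" "\<Inter>S \<subseteq> \<Union>S" "S = {\<Inter>S, \<Union>S}"
proof -
  obtain D E where DE: "S = {D,E}" "D \<subseteq> E" "dset D" using assms unfolding P_def by blast
  then have "\<Inter>S = D" "\<Union>S = E" by auto
  then show "dset (\<Inter>S)" "\<Inter>S \<subseteq> \<Union>S" "S = {\<Inter>S, \<Union>S}" using DE by auto
qed

lemma g_inj: "S \<in> P \<Longrightarrow> S' \<in> P \<Longrightarrow> g S = g S' \<Longrightarrow> S = S'"
proof -
  assume a: "S \<in> P" "S' \<in> P" "g S = g S'"
  then have "\<Inter>S = \<Inter>S'" "\<Union>S = \<Union>S'" unfolding g_def by (auto simp: fun_eq_iff)
  then have "S = {\<Inter>S', \<Union>S'}" using PD(3)[OF a(1)] by simp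
  also have "\<dots> = S'" using PD(3)[OF a(2)] by simp
  finally show ?thesis .
qed

definition Dset :: "('k \<Rightarrow> bool set) \<Rightarrow> ('k \<Rightarrow> bool) set" where
  "Dset W = {d. \<forall>i. d i \<in> W i}"

lemma Dset_open: "finite {i. W i \<noteq> UNIV} \<Longrightarrow> openin Z (Dset W)"
proof -
  assume f: "finite {i. W i \<noteq> UNIV}"
  have "Dset W = (\<Pi>\<^sub>E i\<in>UNIV. W i)" unfolding Dset_def by (auto simp: PiE_UNIV_domain)
  moreover have "openin Z (\<Pi>\<^sub>E i\<in>UNIV. W i)" unfolding Z_def
    by (rule product_topology_basis) (use f in auto)
  ultimately show ?thesis by simp
qed

lemma cyl_open:
  assumes "finite {i. W1 i \<noteq> UNIV}" "finite {i. W2 i \<noteq> UNIV}"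
  shows "openin X {S\<in>P. (\<forall>i. (i \<in> \<Inter>S) \<in> W1 i) \<and> (\<forall>i. (i \<in> \<Union>S) \<in> W2 i)}"
proof -
  have "openin Y (Dset W1 \<times> Dset W2)" unfolding Y_def openin_prod_Times_iff
    using Dset_open[OF assms(1)] Dset_open[OF assms(2)] by simp
  moreover have "{S\<in>P. (\<forall>i. (i \<in> \<Inter>S) \<in> W1 i) \<and> (\<forall>i. (i \<in> \<Union>S) \<in> W2 i)}
     = g -` (Dset W1 \<times> Dset W2) \<inter> P" by (simp add: g_def Dset_def set_eq_iff conj_commute)
  ultimately show ?thesis unfolding openX by blast
qed

lemma open_cyl:
  assumes "openin X Ow" "S \<in> Ow"
  shows "\<exists>I J. finite I \<and> finite J \<and> (\<forall>S'\<in>P. (\<forall>i\<in>I. (i\<in>\<Inter>S') = (i\<in>\<Inter>S)) \<and> (\<forall>j\<in>J. (j\<in>\<Union>S') = (j\<in>\<Union>S)) \<longrightarrow> S' \<in> Ow)"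
proof -
  obtain V where V: "openin Y V" "Ow = g -` V \<inter> P" using assms openX by blast
  define d where "d = (\<lambda>a. a \<in> \<Inter>S)"
  define e where "e = (\<lambda>a. a \<in> \<Union>S)"
  have gS: "g S = (d, e)" unfolding g_def d_def e_def by simp
  have "g S \<in> V" using V(2) assms(2) by blast
  then have "(d, e) \<in> V" using gS by simp
  then have "\<exists>U1 U2. openin Z U1 \<and> openin Z U2 \<and> d \<in> U1 \<and> e \<in> U2 \<and> U1 \<times> U2 \<subseteq> V"
    using V(1)[unfolded Y_def openin_prod_topology_alt, rule_format] by simp
  then obtain U1 U2 where U: "openin Z U1" "openin Z U2" "d \<in> U1" "e \<in> U2" "U1 \<times> U2 \<subseteq> V"
    by blast
  obtain X1 where X1: "d \<in> (\<Pi>\<^sub>E i\<in>UNIV. X1 i)" "finite {i. X1 i \<noteq> topspace (discrete_topology UNIV)}" "(\<Pi>\<^sub>E i\<in>UNIV. X1 i) \<subseteq> U1"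
    using product_topology_open_contains_basis[OF U(1)[unfolded Z_def] U(3)] by blast
  obtain X2 where X2: "e \<in> (\<Pi>\<^sub>E i\<in>UNIV. X2 i)" "finite {i. X2 i \<noteq> topspace (discrete_topology UNIV)}" "(\<Pi>\<^sub>E i\<in>UNIV. X2 i) \<subseteq> U2"
    using product_topology_open_contains_basis[OF U(2)[unfolded Z_def] U(4)] by blast
  have f1: "finite {i. X1 i \<noteq> UNIV}" using X1(2) by simp
  have f2: "finite {i. X2 i \<noteq> UNIV}" using X2(2) by simp
  show ?thesis
  proof (intro exI conjI ballI impI)
    show "finite {i. X1 i \<noteq> UNIV}" "finite {i. X2 i \<noteq> UNIV}" using f1 f2 .
    fix S' assume S'P: "S' \<in> P" and S': "(\<forall>i\<in>{i. X1 i \<noteq> UNIV}. (i\<in>\<Inter>S') = (i\<in>\<Inter>S)) \<and> (\<forall>j\<in>{i. X2 i \<noteq> UNIV}. (j\<in>\<Union>S') = (j\<in>\<Union>S))"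
    define d' where "d' = (\<lambda>a. a \<in> \<Inter>S')"
    define e' where "e' = (\<lambda>a. a \<in> \<Union>S')"
    have gS': "g S' = (d', e')" unfolding g_def d'_def e'_def by simp
    have "d' i \<in> X1 i" for i
    proof (cases "X1 i = UNIV")
      case False
      then have "d' i = d i" using S' unfolding d'_def d_def by blast
      moreover have "d i \<in> X1 i" using X1(1) by (simp add: PiE_iff)
      ultimately show ?thesis by simp
    qed simp
    then have "d' \<in> (\<Pi>\<^sub>E i\<in>UNIV. X1 i)" by (simp add: PiE_iff)
    moreover have "e' i \<in> X2 i" for i
    proof (cases "X2 i = UNIV")
      case False
      then have "e' i = e i" using S' unfolding e'_def e_def by blast
      moreover have "e i \<in> X2 i" using X2(1) by (simp add: PiE_iff)
      ultimately show ?thesis by simp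
    qed simp
    then have "e' \<in> (\<Pi>\<^sub>E i\<in>UNIV. X2 i)" by (simp add: PiE_iff)
    ultimately have "(d', e') \<in> U1 \<times> U2" using X1(3) X2(3) by blast
    then have "g S' \<in> V" using U(5) gS' by auto
    then show "S' \<in> Ow" using V S'P by blast
  qed
qed


lemma Dset_UNIV: "Dset (\<lambda>_. UNIV) = UNIV" unfolding Dset_def by simp

lemma DD_open:
  assumes "finite {i. W1 i \<noteq> UNIV}" "finite {i. W2 i \<noteq> UNIV}"
  shows "openin Y (Dset W1 \<times> Dset W2)"
  unfolding Y_def openin_prod_Times_iff
  using Dset_open[OF assms(1)] Dset_open[OF assms(2)] by simp

lemma compact_Y: "compact_space Y"
  unfolding Y_def Z_def
  by (simp add: compact_space_prod_topology compact_space_product_topology compact_space_discrete_topology)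

lemma Hausdorff_Y: "Hausdorff_space Y"
  unfolding Y_def Z_def
  by (simp add: Hausdorff_space_prod_topology Hausdorff_space_product_topology)

lemma K_char: "g ` P = {(d,e). (\<forall>a b. d b \<longrightarrow> (a,b)\<in>r \<longrightarrow> d a) \<and> (\<forall>i. d i \<longrightarrow> e i)}"
proof (intro equalityI subsetI)
  fix x assume "x \<in> g ` P"
  then obtain S where S: "S \<in> P" "x = g S" by blast
  have "dset (\<Inter>S)" "\<Inter>S \<subseteq> \<Union>S" using PD[OF S(1)] by auto
  then show "x \<in> {(d,e). (\<forall>a b. d b \<longrightarrow> (a,b)\<in>r \<longrightarrow> d a) \<and> (\<forall>i. d i \<longrightarrow> e i)}"
    unfolding S(2) g_def dset_def by auto
next
  fix x assume x: "x \<in> {(d,e). (\<forall>a b. d b \<longrightarrow> (a,b)\<in>r \<longrightarrow> d a) \<and> (\<forall>i. d i \<longrightarrow> e i)}"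
  obtain d e where de: "x = (d,e)" by (cases x)
  have sub: "Collect d \<subseteq> Collect e" and ds: "dset (Collect d)" using x de unfolding dset_def by auto
  have "{Collect d, Collect e} \<in> P" using ptP[OF sub ds] .
  moreover have "g {Collect d, Collect e} = x" unfolding g_def de using sub by (auto simp: fun_eq_iff)
  ultimately show "x \<in> g ` P" by (metis image_eqI)
qed

lemma closed_K: "closedin Y (g ` P)"
proof -
  have "openin Y (UNIV - g ` P)"
  proof (subst openin_subopen, intro ballI)
    fix x assume x: "x \<in> UNIV - g ` P"
    obtain d e where de: "x = (d,e)" by (cases x)
    from x de K_char have "\<not> ((\<forall>a b. d b \<longrightarrow> (a,b)\<in>r \<longrightarrow> d a) \<and> (\<forall>i. d i \<longrightarrow> e i))" by auto
    then consider a b where "d b" "(a,b)\<in>r" "\<not> d a" | i where "d i" "\<not> e i" by blast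
    then show "\<exists>T. openin Y T \<and> x \<in> T \<and> T \<subseteq> UNIV - g ` P"
    proof cases
      case 1
      define W where "W i = (if i = b then {True} else UNIV) \<inter> (if i = a then {False} else UNIV)" for i
      have f: "finite {i. W i \<noteq> UNIV}"
        by (rule finite_subset[of _ "{a,b}"]) (auto simp: W_def)
      have "openin Y (Dset W \<times> Dset (\<lambda>_. UNIV))" by (rule DD_open[OF f]) simp
      moreover have "x \<in> Dset W \<times> Dset (\<lambda>_. UNIV)" using 1 de unfolding Dset_def W_def by auto
      moreover have "Dset W \<times> Dset (\<lambda>_. UNIV) \<subseteq> UNIV - g ` P"
      proof
        fix y assume y: "y \<in> Dset W \<times> Dset (\<lambda>_. UNIV)"
        obtain d' e' where de': "y = (d',e')" by (cases y)
        have "d' b" "\<not> d' a" using y de' unfolding Dset_def W_def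
          by (auto dest!: spec[of _ a] spec[of _ b] split: if_splits)
        then show "y \<in> UNIV - g ` P" using K_char de' 1(2) by auto
      qed
      ultimately show ?thesis by blast
    next
      case 2
      define W1 where "W1 j = (if j = i then {True} else UNIV)" for j
      define W2 where "W2 j = (if j = i then {False} else UNIV)" for j
      have f1: "finite {j. W1 j \<noteq> UNIV}"
        by (rule finite_subset[of _ "{i}"]) (auto simp: W1_def)
      have f2: "finite {j. W2 j \<noteq> UNIV}"
        by (rule finite_subset[of _ "{i}"]) (auto simp: W2_def)
      have "openin Y (Dset W1 \<times> Dset W2)" by (rule DD_open[OF f1 f2])
      moreover have "x \<in> Dset W1 \<times> Dset W2" using 2 de unfolding Dset_def W1_def W2_def by auto
      moreover have "Dset W1 \<times> Dset W2 \<subseteq> UNIV - g ` P"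
      proof
        fix y assume y: "y \<in> Dset W1 \<times> Dset W2"
        obtain d' e' where de': "y = (d',e')" by (cases y)
        have "d' i" "\<not> e' i" using y de' unfolding Dset_def W1_def W2_def
          by (auto dest!: spec[of _ i])
        then show "y \<in> UNIV - g ` P" using K_char de' by auto
      qed
      ultimately show ?thesis by blast
    qed
  qed
  then show ?thesis unfolding closedin_def by simp
qed

lemma compact_X: "compact_space X"
proof -
  have cK: "compactin Y (g ` P)" using closedin_compact_space[OF compact_Y closed_K] .
  show ?thesis unfolding compact_space_def compactin_def
  proof (intro conjI allI impI)
    show "topspace X \<subseteq> topspace X" by simp
    fix \<U> assume H: "(\<forall>U\<in>\<U>. openin X U) \<and> topspace X \<subseteq> \<Union>\<U>"
    have "\<forall>U\<in>\<U>. \<exists>V. openin Y V \<and> U = g -` V \<inter> P" using H openX by blast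
    then obtain Vf where Vf: "\<forall>U\<in>\<U>. openin Y (Vf U) \<and> U = g -` (Vf U) \<inter> P" by metis
    have cov: "g ` P \<subseteq> \<Union>(Vf ` \<U>)"
    proof
      fix x assume "x \<in> g ` P"
      then obtain S where S: "S \<in> P" "x = g S" by blast
      then obtain U where U: "U \<in> \<U>" "S \<in> U" using H by auto
      then have "g S \<in> Vf U" using Vf by blast
      then show "x \<in> \<Union>(Vf ` \<U>)" using U S by blast
    qed
    have "\<forall>V\<in>Vf ` \<U>. openin Y V" using Vf by blast
    then obtain F where F: "finite F" "F \<subseteq> Vf ` \<U>" "g ` P \<subseteq> \<Union>F"
      using cK cov unfolding compactin_def by blast
    then obtain \<U>' where U': "\<U>' \<subseteq> \<U>" "finite \<U>'" "F = Vf ` \<U>'"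
      using finite_subset_image[OF F(1) F(2)] by blast
    have "topspace X \<subseteq> \<Union>\<U>'"
    proof
      fix S assume "S \<in> topspace X"
      then have S: "S \<in> P" by simp
      then have "g S \<in> \<Union>F" using F by blast
      then obtain U where U: "U \<in> \<U>'" "g S \<in> Vf U" using U' by blast
      then have "S \<in> U" using Vf U'(1) S by blast
      then show "S \<in> \<Union>\<U>'" using U by blast
    qed
    then show "\<exists>\<F>. finite \<F> \<and> \<F> \<subseteq> \<U> \<and> topspace X \<subseteq> \<Union>\<F>" using U' by blast
  qed
qed

lemma Hausdorff_X: "Hausdorff_space X"
  unfolding Hausdorff_space_def
proof (intro allI impI)
  fix x y assume H: "x \<in> topspace X \<and> y \<in> topspace X \<and> x \<noteq> y"
  then have "g x \<noteq> g y" using g_inj by auto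
  then obtain U V where UV: "openin Y U" "openin Y V" "g x \<in> U" "g y \<in> V" "disjnt U V"
    using Hausdorff_Y unfolding Hausdorff_space_def by (metis UNIV_I topY)
  have "openin X (g -` U \<inter> P)" "openin X (g -` V \<inter> P)" using UV openX by blast+
  moreover have "x \<in> g -` U \<inter> P" "y \<in> g -` V \<inter> P" using H UV by auto
  moreover have "disjnt (g -` U \<inter> P) (g -` V \<inter> P)" using UV(5) by (auto simp: disjnt_def)
  ultimately show "\<exists>U V. openin X U \<and> openin X V \<and> x \<in> U \<and> y \<in> V \<and> disjnt U V" by blast
qed

lemma single_open1: "openin X {S\<in>P. (i \<in> \<Inter>S) = v}"
proof -
  have f: "finite {j. (if j = i then {v} else UNIV) \<noteq> UNIV}"
    by (rule finite_subset[of _ "{i}"]) auto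
  have "openin X {S\<in>P. (\<forall>j. (j \<in> \<Inter>S) \<in> (if j = i then {v} else UNIV)) \<and> (\<forall>j. (j \<in> \<Union>S) \<in> (\<lambda>_. UNIV) j)}"
    by (rule cyl_open[OF f]) simp
  moreover have "{S\<in>P. (\<forall>j. (j \<in> \<Inter>S) \<in> (if j = i then {v} else UNIV)) \<and> (\<forall>j. (j \<in> \<Union>S) \<in> (\<lambda>_. UNIV) j)}
     = {S\<in>P. (i \<in> \<Inter>S) = v}" by auto
  ultimately show ?thesis by simp
qed

lemma single_open2: "openin X {S\<in>P. (i \<in> \<Union>S) = v}"
proof -
  have f: "finite {j. (if j = i then {v} else UNIV) \<noteq> UNIV}"
    by (rule finite_subset[of _ "{i}"]) auto
  have "openin X {S\<in>P. (\<forall>j. (j \<in> \<Inter>S) \<in> (\<lambda>_. UNIV) j) \<and> (\<forall>j. (j \<in> \<Union>S) \<in> (if j = i then {v} else UNIV))}"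
    by (rule cyl_open[OF _ f]) simp
  moreover have "{S\<in>P. (\<forall>j. (j \<in> \<Inter>S) \<in> (\<lambda>_. UNIV) j) \<and> (\<forall>j. (j \<in> \<Union>S) \<in> (if j = i then {v} else UNIV))}
     = {S\<in>P. (i \<in> \<Union>S) = v}" by auto
  ultimately show ?thesis by simp
qed

lemma tdisc_X: "totally_disconnected_space X"
  unfolding totally_disconnected_space_def
proof (intro allI impI ballI)
  fix S x y assume H: "S \<subseteq> topspace X \<and> connectedin X S" and x: "x \<in> S" and y: "y \<in> S"
  have xP: "x \<in> P" and yP: "y \<in> P" using H x y by auto
  show "x = y"
  proof (rule ccontr)
    assume "x \<noteq> y"
    then have "g x \<noteq> g y" using g_inj xP yP by auto
    then have "(\<lambda>a. a\<in>\<Inter>x) \<noteq> (\<lambda>a. a\<in>\<Inter>y) \<or> (\<lambda>a. a\<in>\<Union>x) \<noteq> (\<lambda>a. a\<in>\<Union>y)"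
      unfolding g_def by auto
    then consider i where "(i \<in> \<Inter>x) \<noteq> (i \<in> \<Inter>y)" | i where "(i \<in> \<Union>x) \<noteq> (i \<in> \<Union>y)"
      by (metis (full_types) ext)
    then show False
    proof cases
      case 1
      let ?v = "i \<in> \<Inter>x"
      show False
        using connectedinD[OF H[THEN conjunct2] single_open1[of i ?v] single_open1[of i "\<not> ?v"]]
          H x y xP yP 1 by auto
    next
      case 2
      let ?v = "i \<in> \<Union>x"
      show False
        using connectedinD[OF H[THEN conjunct2] single_open2[of i ?v] single_open2[of i "\<not> ?v"]]
          H x y xP yP 2 by auto
    qed
  qed
qed


subsection \<open>The base\<close>

definition UA :: "'k set \<Rightarrow> 'k \<Rightarrow> 'k set \<Rightarrow> 'k set \<Rightarrow> 'k set set set" where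
  "UA A1 \<beta> F G = {S\<in>P. A1 \<subseteq> \<Inter>S \<and> \<beta> \<notin> \<Inter>S \<and> F \<subseteq> \<Union>S \<and> G \<inter> \<Union>S = {}}"
definition NB :: "'k \<Rightarrow> 'k set set set" where
  "NB \<alpha> = {S\<in>P. \<alpha> \<in> \<Inter>S}"
definition BB :: "'k set set set set" where
  "BB = {UA A1 \<beta> F G | A1 \<beta> F G. finite A1 \<and> finite F \<and> finite G \<and> \<beta> \<in> F \<union> G \<and> UA A1 \<beta> F G \<noteq> {}} \<union> range NB"
definition pp :: "'k set set" where
  "pp = {UNIV}"

lemma pp_P: "pp \<in> P"
proof -
  have "dset UNIV" unfolding dset_def by simp
  then have "{UNIV, UNIV} \<in> P" using ptP[of UNIV UNIV] by simp
  then show ?thesis unfolding pp_def by simp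
qed

lemma pp_simps[simp]: "\<Inter>pp = UNIV" "\<Union>pp = UNIV" unfolding pp_def by auto

lemma NB_open: "openin X (NB \<alpha>)"
  using single_open1[of \<alpha> True] unfolding NB_def by simp

lemma UA_open: assumes True: "finite A1 \<and> finite F \<and> finite G" shows "openin X (UA A1 \<beta> F G)"
proof -
  define W1 where "W1 i = (if i \<in> A1 then {True} else UNIV) \<inter> (if i = \<beta> then {False} else UNIV)" for i
  define W2 where "W2 i = (if i \<in> F then {True} else UNIV) \<inter> (if i \<in> G then {False} else UNIV)" for i
  show ?thesis
  proof -
    have f1: "finite {i. W1 i \<noteq> UNIV}"
      by (rule finite_subset[of _ "insert \<beta> A1"]) (use True in \<open>auto simp: W1_def\<close>)
    have f2: "finite {i. W2 i \<noteq> UNIV}"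
      by (rule finite_subset[of _ "F \<union> G"]) (use True in \<open>auto simp: W2_def\<close>)
    have eq: "{S\<in>P. (\<forall>i. (i \<in> \<Inter>S) \<in> W1 i) \<and> (\<forall>i. (i \<in> \<Union>S) \<in> W2 i)} = UA A1 \<beta> F G"
    proof (intro equalityI subsetI)
      fix S assume "S \<in> {S\<in>P. (\<forall>i. (i \<in> \<Inter>S) \<in> W1 i) \<and> (\<forall>i. (i \<in> \<Union>S) \<in> W2 i)}"
      then have S: "S \<in> P" "\<And>i. (i \<in> \<Inter>S) \<in> W1 i" "\<And>i. (i \<in> \<Union>S) \<in> W2 i" by auto
      have "A1 \<subseteq> \<Inter>S"
      proof
        fix i assume "i \<in> A1" then show "i \<in> \<Inter>S" using S(2)[of i] unfolding W1_def by auto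
      qed
      moreover have "\<beta> \<notin> \<Inter>S" using S(2)[of \<beta>] unfolding W1_def by auto
      moreover have "F \<subseteq> \<Union>S"
      proof
        fix i assume "i \<in> F" then show "i \<in> \<Union>S" using S(3)[of i] unfolding W2_def by auto
      qed
      moreover have "G \<inter> \<Union>S = {}"
      proof -
        have "i \<notin> \<Union>S" if "i \<in> G" for i using S(3)[of i] that unfolding W2_def by auto
        then show ?thesis by blast
      qed
      ultimately show "S \<in> UA A1 \<beta> F G" unfolding UA_def using S(1) by blast
    next
      fix S assume "S \<in> UA A1 \<beta> F G"
      then have S: "S \<in> P" "A1 \<subseteq> \<Inter>S" "\<beta> \<notin> \<Inter>S" "F \<subseteq> \<Union>S" "G \<inter> \<Union>S = {}" unfolding UA_def by auto
      have "(i \<in> \<Inter>S) \<in> W1 i" for i unfolding W1_def using S(2,3) by auto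
      moreover have "(i \<in> \<Union>S) \<in> W2 i" for i unfolding W2_def using S(4,5) by auto
      ultimately show "S \<in> {S\<in>P. (\<forall>i. (i \<in> \<Inter>S) \<in> W1 i) \<and> (\<forall>i. (i \<in> \<Union>S) \<in> W2 i)}"
        using S(1) by blast
    qed
    show ?thesis using cyl_open[OF f1 f2] unfolding eq .
  qed
qed


lemma pp_NB: "pp \<in> NB \<alpha>" unfolding NB_def using pp_P by (auto simp: pp_def)

lemma dsetD: "dset D \<Longrightarrow> b \<in> D \<Longrightarrow> (a,b) \<in> r \<Longrightarrow> a \<in> D"
  unfolding dset_def by blast

lemma NB_mono: "(\<alpha>,a) \<in> r \<Longrightarrow> NB a \<subseteq> NB \<alpha>"
proof
  fix S assume a: "(\<alpha>,a) \<in> r" "S \<in> NB a"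
  then have "S \<in> P" "a \<in> \<Inter>S" unfolding NB_def by auto
  then have "\<alpha> \<in> \<Inter>S" using dsetD[OF PD(1), OF \<open>S \<in> P\<close> _ a(1)] by blast
  then show "S \<in> NB \<alpha>" using \<open>S \<in> P\<close> unfolding NB_def by blast
qed

lemma und_dset: "dset (und a)"
  unfolding dset_def und_def using trans_r by blast

lemma und_P: "{und a} \<in> P" "\<Inter>{und a} = und a"
  using ptP[of "und a" "und a", OF _ und_dset] by auto

lemma nbhd_pp:
  assumes "openin X Ow" "pp \<in> Ow"
  shows "\<exists>\<alpha>. NB \<alpha> \<subseteq> Ow"
proof -
  obtain I J where IJ0: "finite I \<and> finite J \<and> (\<forall>S'\<in>P. (\<forall>i\<in>I. (i\<in>\<Inter>S') = (i\<in>\<Inter>pp)) \<and> (\<forall>j\<in>J. (j\<in>\<Union>S') = (j\<in>\<Union>pp)) \<longrightarrow> S' \<in> Ow)"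
    using open_cyl[OF assms] by iprover
  have IJ: "finite I" "finite J" using IJ0 by iprover+
  note IJ3 = IJ0[THEN conjunct2, THEN conjunct2, rule_format]
  have "finite (I \<union> J)" using IJ by simp
  then have "|I \<union> J| <o r" by (rule finite_small)
  then obtain \<alpha> where \<alpha>: "\<forall>b\<in>I \<union> J. (b,\<alpha>) \<in> r" using small_bounded by blast
  have "NB \<alpha> \<subseteq> Ow"
  proof
    fix S' assume S': "S' \<in> NB \<alpha>"
    define D where "D = \<Inter>S'"
    define E where "E = \<Union>S'"
    have P'1: "S' \<in> P" using S' unfolding NB_def by blast
    have P'2: "\<alpha> \<in> D" using S' unfolding NB_def D_def by blast
    have dD1: "dset D" unfolding D_def by (rule PD(1)[OF P'1])
    have dD2: "D \<subseteq> E" unfolding D_def E_def by (rule PD(2)[OF P'1])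
    have iD: "i \<in> D" if "i \<in> I \<union> J" for i
    proof -
      have "(i,\<alpha>) \<in> r" using \<alpha> that by blast
      then show ?thesis using dsetD[OF dD1 P'2] by blast
    qed
    have c1: "\<forall>i\<in>I. (i\<in>D) = (i\<in>\<Inter>pp)" using iD by simp
    have c2: "\<forall>j\<in>J. (j\<in>E) = (j\<in>\<Union>pp)" using iD dD2 by auto
    show "S' \<in> Ow" by (rule IJ3[OF P'1]) (use c1 c2 in \<open>unfold D_def E_def, iprover\<close>)
  qed
  then show ?thesis by blast
qed

lemma small_family:
  assumes "|\<A>| <o r" "\<forall>W\<in>\<A>. openin X W \<and> pp \<in> W"
  shows "\<exists>a. NB a \<subseteq> \<Inter>\<A>"
proof -
  have ex: "\<forall>W\<in>\<A>. \<exists>\<alpha>. NB \<alpha> \<subseteq> W"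
  proof
    fix W assume "W \<in> \<A>"
    then have "openin X W" "pp \<in> W" using assms(2) by auto
    then show "\<exists>\<alpha>. NB \<alpha> \<subseteq> W" by (rule nbhd_pp)
  qed
  obtain f where f: "\<forall>W\<in>\<A>. NB (f W) \<subseteq> W" using bchoice[OF ex] by iprover
  have "|f ` \<A>| <o r" using image_small[OF assms(1)] .
  then obtain a where a: "\<forall>b\<in>f ` \<A>. (b,a) \<in> r" using small_bounded by iprover
  have sub: "NB a \<subseteq> W" if "W \<in> \<A>" for W
  proof -
    have "f W \<in> f ` \<A>" using that by (rule imageI)
    then have "(f W, a) \<in> r" by (rule bspec[OF a])
    then have "NB a \<subseteq> NB (f W)" by (rule NB_mono)
    moreover have "NB (f W) \<subseteq> W" using that by (rule bspec[OF f])
    ultimately show ?thesis by (rule subset_trans)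
  qed
  have "NB a \<subseteq> \<Inter>\<A>"
  proof (rule Inter_greatest)
    fix W assume "W \<in> \<A>" then show "NB a \<subseteq> W" by (rule sub)
  qed
  then show ?thesis by iprover
qed

lemma UA_iff: "S \<in> UA A1 \<beta> F G \<longleftrightarrow> S \<in> P \<and> A1 \<subseteq> \<Inter>S \<and> \<beta> \<notin> \<Inter>S \<and> F \<subseteq> \<Union>S \<and> G \<inter> \<Union>S = {}"
  by (simp only: UA_def mem_Collect_eq)

lemma local_base:
  assumes "openin X Ow" "S \<in> Ow"
  shows "\<exists>W\<in>BB. S \<in> W \<and> W \<subseteq> Ow"
proof -
  have SP: "S \<in> P" using openin_subset[OF assms(1)] assms(2) by auto
  define D where "D = \<Inter>S"
  define E where "E = \<Union>S"
  have DE: "dset D" "D \<subseteq> E" "S = {D,E}" using PD[OF SP] unfolding D_def E_def by auto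
  show ?thesis
  proof (cases "D = UNIV")
    case True
    then have "E = UNIV" using DE by auto
    then have "S = pp" using DE(3) True unfolding pp_def by simp
    then obtain \<alpha> where "NB \<alpha> \<subseteq> Ow" using nbhd_pp assms by blast
    moreover have "NB \<alpha> \<in> BB" unfolding BB_def by blast
    ultimately show ?thesis using pp_NB \<open>S = pp\<close> by blast
  next
    case False
    obtain I J where IJ0: "finite I \<and> finite J \<and> (\<forall>S'\<in>P. (\<forall>i\<in>I. (i\<in>\<Inter>S') = (i\<in>\<Inter>S)) \<and> (\<forall>j\<in>J. (j\<in>\<Union>S') = (j\<in>\<Union>S)) \<longrightarrow> S' \<in> Ow)"
      using open_cyl[OF assms] by iprover
    have IJ: "finite I" "finite J" using IJ0 by iprover+
    note IJ3 = IJ0[THEN conjunct2, THEN conjunct2, rule_format]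
    define \<beta> where "\<beta> = wo_rel.minim r (- D)"
    have \<beta>1: "\<beta> \<notin> D" using wo_rel.minim_in[OF wo, of "- D"] False unfolding \<beta>_def by auto
    have \<beta>2: "(\<beta>, i) \<in> r" if "i \<notin> D" for i
      using wo_rel.minim_least[OF wo, of "- D" i] that unfolding \<beta>_def by auto
    define A1 where "A1 = I \<inter> D"
    define F where "F = insert \<beta> J \<inter> E"
    define G where "G = insert \<beta> J - E"
    have fin: "finite A1" "finite F" "finite G" using IJ unfolding A1_def F_def G_def by auto
    have "A1 \<subseteq> D" "F \<subseteq> E" "G \<inter> E = {}" unfolding A1_def F_def G_def by auto
    then have SW: "S \<in> UA A1 \<beta> F G" unfolding UA_iff D_def[symmetric] E_def[symmetric]
      using SP \<beta>1 by blast
    have "\<beta> \<in> F \<union> G" unfolding F_def G_def by auto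
    then have WB: "UA A1 \<beta> F G \<in> BB" unfolding BB_def using fin SW by blast
    have "UA A1 \<beta> F G \<subseteq> Ow"
    proof
      fix S' assume S': "S' \<in> UA A1 \<beta> F G"
      define D' where "D' = \<Inter>S'"
      define E' where "E' = \<Union>S'"
      have S'1: "S' \<in> P" "A1 \<subseteq> D'" "\<beta> \<notin> D'" "F \<subseteq> E'" "G \<inter> E' = {}"
        using S' unfolding UA_iff D'_def E'_def by blast+
      have dD': "dset D'" using PD(1)[OF S'1(1)] unfolding D'_def .
      have "(i\<in>D') = (i\<in>D)" if "i \<in> I" for i
      proof (cases "i \<in> D")
        case True
        then have "i \<in> A1" using that unfolding A1_def by blast
        then show ?thesis using S'1(2) True by blast
      next
        case False
        have "i \<notin> D'"
        proof
          assume "i \<in> D'"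
          then have "\<beta> \<in> D'" using dsetD[OF dD'] \<beta>2[OF False] by blast
          then show False using S'1(3) by blast
        qed
        then show ?thesis using False by blast
      qed
      moreover have "(j\<in>E') = (j\<in>E)" if "j \<in> J" for j
      proof (cases "j \<in> E")
        case True
        then have "j \<in> F" using that unfolding F_def by blast
        then show ?thesis using S'1(4) True by blast
      next
        case False
        then have "j \<in> G" using that unfolding G_def by blast
        then show ?thesis using S'1(5) False by blast
      qed
      ultimately have "(\<forall>i\<in>I. (i\<in>D') = (i\<in>D)) \<and> (\<forall>j\<in>J. (j\<in>E') = (j\<in>E))"
        by simp
      then show "S' \<in> Ow" by (rule IJ3[OF S'1(1), unfolded D'_def[symmetric] E'_def[symmetric] D_def[symmetric] E_def[symmetric]])
    qed
    then show ?thesis using WB SW by blast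
  qed
qed

lemma BB_open: "W \<in> BB \<Longrightarrow> openin X W"
  unfolding BB_def using UA_open NB_open by auto

lemma is_base_BB: "is_base X BB"
  unfolding is_base_def
proof (intro conjI ballI allI impI)
  show "openin X U" if "U \<in> BB" for U using BB_open that .
  fix U assume U: "openin X U"
  show "\<exists>\<U>\<subseteq>BB. \<Union>\<U> = U"
  proof (intro exI conjI)
    show "{W\<in>BB. W \<subseteq> U} \<subseteq> BB" by blast
    show "\<Union>{W\<in>BB. W \<subseteq> U} = U"
    proof (intro equalityI subsetI)
      fix x assume "x \<in> \<Union>{W\<in>BB. W \<subseteq> U}" then show "x \<in> U" by blast
    next
      fix x assume "x \<in> U"
      then obtain W where "W\<in>BB" "x \<in> W" "W \<subseteq> U" using local_base[OF U] by blast
      then show "x \<in> \<Union>{W\<in>BB. W \<subseteq> U}" by blast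
    qed
  qed
qed


lemma BB_cases:
  assumes "V \<in> BB"
  obtains (A) A1 \<beta> F G where "V = UA A1 \<beta> F G" "finite A1" "finite F" "finite G" "\<beta> \<in> F \<union> G" "UA A1 \<beta> F G \<noteq> {}"
  | (N) \<alpha> where "V = NB \<alpha>"
  using assms unfolding BB_def by blast

lemma und_refl: "a \<in> und a" unfolding und_def by simp

lemma und_NB: "{und a} \<in> NB \<alpha> \<longleftrightarrow> \<alpha> \<in> und a"
  unfolding NB_def using und_P by simp

lemma sup_NB: "{V\<in>BB. NB \<alpha> \<subseteq> V} \<subseteq> NB ` und \<alpha>"
proof
  fix V assume V: "V \<in> {V\<in>BB. NB \<alpha> \<subseteq> V}"
  then have VB: "V \<in> BB" and sub: "NB \<alpha> \<subseteq> V" by auto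
  from VB show "V \<in> NB ` und \<alpha>"
  proof (cases rule: BB_cases)
    case (A A1 \<beta> F G)
    have "pp \<in> V" using sub pp_NB by (rule subsetD)
    then have "pp \<in> UA A1 \<beta> F G" using A(1) by simp
    then show ?thesis by (simp add: UA_iff)
  next
    case (N \<alpha>')
    have "{und \<alpha>} \<in> NB \<alpha>" using und_NB und_refl by simp
    then have "{und \<alpha>} \<in> NB \<alpha>'" using sub N by (simp add: subset_iff)
    then have "\<alpha>' \<in> und \<alpha>" using und_NB by simp
    then show ?thesis using N by simp
  qed
qed

definition FS :: "'k set \<Rightarrow> 'k set set" where "FS T = {A. finite A \<and> A \<subseteq> T}"

lemma sup_UA:
  assumes fin: "finite A1" "finite F" "finite G" and S0: "S0 \<in> UA A1 \<beta> F G"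
  defines "Dst \<equiv> {x. \<exists>b\<in>A1. (x,b)\<in>r}"
  defines "T \<equiv> Dst \<union> F \<union> G"
  shows "{V\<in>BB. UA A1 \<beta> F G \<subseteq> V} \<subseteq> NB ` T \<union> (\<lambda>(A,b,F',G'). UA A b F' G') ` (FS T \<times> T \<times> FS T \<times> FS T)"
proof
  define D0 where "D0 = \<Inter>S0"
  define E0 where "E0 = \<Union>S0"
  have S0': "S0 \<in> P" "A1 \<subseteq> D0" "\<beta> \<notin> D0" "F \<subseteq> E0" "G \<inter> E0 = {}"
    using S0 unfolding UA_iff D0_def E0_def by blast+
  have dD0: "dset D0" "D0 \<subseteq> E0" using PD[OF S0'(1)] unfolding D0_def E0_def by simp_all
  have DstD0: "Dst \<subseteq> D0"
  proof
    fix x assume "x \<in> Dst"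
    then obtain b where "b \<in> A1" "(x,b) \<in> r" unfolding Dst_def by blast
    then show "x \<in> D0" using dsetD[OF dD0(1)] S0'(2) by blast
  qed
  have dDst: "dset Dst" unfolding dset_def Dst_def using trans_r by blast
  have A1Dst: "A1 \<subseteq> Dst" unfolding Dst_def using refl_r by blast
  have sub1: "Dst \<subseteq> Dst \<union> F" by blast
  have sub2: "Dst \<subseteq> - G" using DstD0 dD0(2) S0'(5) by blast
  have q1P: "{Dst, Dst \<union> F} \<in> P" by (rule ptP[OF sub1 dDst])
  have q2P: "{Dst, - G} \<in> P" by (rule ptP[OF sub2 dDst])
  have q1s: "\<Inter>{Dst, Dst \<union> F} = Dst" "\<Union>{Dst, Dst \<union> F} = Dst \<union> F" using sub1 by (rule pt_simps)+
  have q2s: "\<Inter>{Dst, - G} = Dst" "\<Union>{Dst, - G} = - G" using sub2 by (rule pt_simps)+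
  have q1U: "{Dst, Dst \<union> F} \<in> UA A1 \<beta> F G"
    unfolding UA_iff q1s using q1P A1Dst DstD0 S0'(3,4,5) dD0(2) by blast
  have q2U: "{Dst, - G} \<in> UA A1 \<beta> F G"
    unfolding UA_iff q2s using q2P A1Dst DstD0 S0'(3,4,5) by blast
  fix V assume V: "V \<in> {V\<in>BB. UA A1 \<beta> F G \<subseteq> V}"
  then have VB: "V \<in> BB" and sub: "UA A1 \<beta> F G \<subseteq> V" by auto
  from VB show "V \<in> NB ` T \<union> (\<lambda>(A,b,F',G'). UA A b F' G') ` (FS T \<times> T \<times> FS T \<times> FS T)"
  proof (cases rule: BB_cases)
    case (A A' b' F' G')
    have "{Dst, Dst \<union> F} \<in> V" using sub q1U by (rule subsetD)
    then have "{Dst, Dst \<union> F} \<in> UA A' b' F' G'" using A(1) by simp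
    then have c1: "A' \<subseteq> Dst" "F' \<subseteq> Dst \<union> F" unfolding UA_iff q1s by blast+
    have "{Dst, - G} \<in> V" using sub q2U by (rule subsetD)
    then have "{Dst, - G} \<in> UA A' b' F' G'" using A(1) by simp
    then have "G' \<inter> - G = {}" unfolding UA_iff q2s by blast
    then have c2: "G' \<subseteq> G" by blast
    have "A' \<in> FS T" "F' \<in> FS T" "G' \<in> FS T" unfolding FS_def T_def using c1 c2 A(2,3,4) by blast+
    moreover have "b' \<in> T" unfolding T_def using c1 c2 A(5) by blast
    ultimately have "(A',b',F',G') \<in> FS T \<times> T \<times> FS T \<times> FS T" by simp
    then show ?thesis using A(1) by (simp add: image_iff) (metis case_prod_conv)
  next
    case (N \<alpha>')
    have "{Dst, Dst \<union> F} \<in> V" using sub q1U by (rule subsetD)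
    then have "{Dst, Dst \<union> F} \<in> NB \<alpha>'" using N by simp
    then have "\<alpha>' \<in> Dst" unfolding NB_def q1s by simp
    then have "\<alpha>' \<in> T" unfolding T_def by simp
    then show ?thesis using N by simp
  qed
qed

lemma op_like_BB: "op_like (UNIV::'k set) BB"
  unfolding op_like_def r_def[symmetric]
proof
  fix U assume "U \<in> BB"
  then show "|{V\<in>BB. U \<subseteq> V}| <o r"
  proof (cases rule: BB_cases)
    case (A A1 \<beta> F G)
    obtain S0 where S0: "S0 \<in> UA A1 \<beta> F G" using A(6) by blast
    define Dst where "Dst = {x. \<exists>b\<in>A1. (x,b)\<in>r}"
    define T where "T = Dst \<union> F \<union> G"
    have "|A1| <o r" by (rule finite_small[OF A(2)])
    then obtain a where a: "\<forall>b\<in>A1. (b,a) \<in> r" using small_bounded by iprover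
    have "Dst \<subseteq> und a" unfolding Dst_def und_def using a trans_r by blast
    then have "|Dst| <o r" using und_small mono_small by blast
    moreover have "|F| <o r" "|G| <o r" by (rule finite_small[OF A(3)], rule finite_small[OF A(4)])
    ultimately have T: "|T| <o r" unfolding T_def using Un_small by blast
    have FT: "|FS T| <o r" unfolding FS_def using fin_subsets_small[OF T] .
    have "|FS T \<times> T \<times> FS T \<times> FS T| <o r" by (rule Times_small[OF FT Times_small[OF T Times_small[OF FT FT]]])
    then have s1: "|(\<lambda>(A,b,F',G'). UA A b F' G') ` (FS T \<times> T \<times> FS T \<times> FS T)| <o r" by (rule image_small)
    have s2: "|NB ` T| <o r" using T by (rule image_small)
    have "|NB ` T \<union> (\<lambda>(A,b,F',G'). UA A b F' G') ` (FS T \<times> T \<times> FS T \<times> FS T)| <o r"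
      using Un_small[OF s2 s1] .
    moreover have "{V\<in>BB. U \<subseteq> V} \<subseteq> NB ` T \<union> (\<lambda>(A,b,F',G'). UA A b F' G') ` (FS T \<times> T \<times> FS T \<times> FS T)"
      unfolding A(1) T_def Dst_def by (rule sup_UA[OF A(2,3,4) S0])
    ultimately show ?thesis by (rule mono_small[rotated])
  next
    case (N \<alpha>)
    have "|NB ` und \<alpha>| <o r" using und_small by (rule image_small)
    then show ?thesis unfolding N using sup_NB by (rule mono_small[rotated])
  qed
qed


lemma base_local:
  assumes "is_base X B'" "openin X Ow" "x \<in> Ow"
  shows "\<exists>W\<in>B'. x \<in> W \<and> W \<subseteq> Ow"
proof -
  obtain \<U> where U: "\<U> \<subseteq> B'" "\<Union>\<U> = Ow" using assms(1,2) unfolding is_base_def by blast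
  then obtain W where "W \<in> \<U>" "x \<in> W" using assms(3) by blast
  then show ?thesis using U by blast
qed

lemma no_small_base:
  assumes M: "|M| <o r" and B: "is_base X B'" and op: "op_like M B'"
  shows False
proof -
  have opn: "\<forall>W\<in>B'. openin X W" using B unfolding is_base_def by blast
  define Bp where "Bp = {W\<in>B'. pp \<in> W}"
  have Bpo: "\<forall>W\<in>Bp. openin X W \<and> pp \<in> W" using opn unfolding Bp_def by blast
  have notsmall: "\<not> |Bp| <o r"
  proof
    assume sm: "|Bp| <o r"
    obtain a where a: "NB a \<subseteq> \<Inter>Bp" using small_family[OF sm Bpo] by iprover
    obtain b where b: "(a,b) \<in> r" "b \<noteq> a" using no_max by iprover
    obtain W where W: "W\<in>B'" "pp \<in> W" "W \<subseteq> NB b"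
      using base_local[OF B NB_open pp_NB] by blast
    have "W \<in> Bp" unfolding Bp_def using W by blast
    then have "\<Inter>Bp \<subseteq> W" by (rule Inter_lower)
    then have "NB a \<subseteq> NB b" using a W(3) by (meson subset_trans)
    moreover have "{und a} \<in> NB a" using und_NB und_refl by simp
    ultimately have "{und a} \<in> NB b" by (rule subsetD)
    then have "(b,a) \<in> r" using und_NB unfolding und_def by simp
    then show False using antisym_r b by blast
  qed
  have "r \<le>o |Bp|" using notsmall not_ordLeq_iff_ordLess[OF card_of_Well_order WO, of Bp] by blast
  then have "|M| \<le>o |Bp|" using M ordLess_ordLeq_trans ordLess_imp_ordLeq by blast
  then obtain f where f: "inj_on f M" "f ` M \<subseteq> Bp" using card_of_ordLeq[of M Bp] by blast
  define A where "A = f ` M"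
  have Asm: "|A| <o r" unfolding A_def using M by (rule image_small)
  have Ao: "\<forall>W\<in>A. openin X W \<and> pp \<in> W" using Bpo f(2) unfolding A_def by blast
  obtain a where a: "NB a \<subseteq> \<Inter>A" using small_family[OF Asm Ao] by iprover
  obtain W0 where W0: "W0\<in>B'" "pp \<in> W0" "W0 \<subseteq> NB a"
    using base_local[OF B NB_open pp_NB] by blast
  have "A \<subseteq> {V\<in>B'. W0 \<subseteq> V}"
  proof
    fix V assume V: "V \<in> A"
    then have "V \<in> B'" using f(2) unfolding A_def Bp_def by blast
    moreover have "\<Inter>A \<subseteq> V" using V by (rule Inter_lower)
    then have "W0 \<subseteq> V" using W0(3) a by (meson subset_trans)
    ultimately show "V \<in> {V\<in>B'. W0 \<subseteq> V}" by blast
  qed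
  then have "|A| \<le>o |{V\<in>B'. W0 \<subseteq> V}|" by (rule card_of_mono1)
  moreover have "|{V\<in>B'. W0 \<subseteq> V}| <o |M|" using op W0(1) unfolding op_like_def by blast
  ultimately have "|A| <o |M|" by (rule ordLeq_ordLess_trans)
  moreover have "|M| \<le>o |A|" using card_of_ordLeq[of M A] f(1) unfolding A_def by blast
  ultimately show False using not_ordLess_ordLeq by blast
qed

lemma Ppoint: "P_point (UNIV::'k set) X pp"
  unfolding P_point_def
proof (intro conjI allI impI)
  show "pp \<in> topspace X" using pp_P by simp
  fix \<A> :: "'k set set set set" assume H: "|\<A>| <o |UNIV::'k set| \<and> (\<forall>N\<in>\<A>. pp \<in> X interior_of N)"
  let ?B = "(\<lambda>N. X interior_of N) ` \<A>"
  have "|\<A>| <o r" unfolding r_def using H by (rule conjunct1)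
  then have sm: "|?B| <o r" by (rule image_small)
  have H2: "\<forall>N\<in>\<A>. pp \<in> X interior_of N" using H by (rule conjunct2)
  have Bo: "\<forall>W\<in>?B. openin X W \<and> pp \<in> W"
  proof
    fix W assume "W \<in> ?B"
    then obtain N where N: "N \<in> \<A>" "W = X interior_of N" by (rule imageE)
    have "openin X (X interior_of N)" by (rule openin_interior_of)
    moreover have "pp \<in> X interior_of N" using H2 N(1) by (rule bspec)
    ultimately show "openin X W \<and> pp \<in> W" using N(2) by simp
  qed
  obtain a where a: "NB a \<subseteq> \<Inter>?B" using small_family[OF sm Bo] by iprover
  have "\<Inter>?B \<subseteq> \<Inter>\<A>"
  proof (rule Inter_greatest)
    fix N assume "N \<in> \<A>"
    then have "X interior_of N \<in> ?B" by (rule imageI)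
    then have "\<Inter>?B \<subseteq> X interior_of N" by (rule Inter_lower)
    also have "\<dots> \<subseteq> N" by (rule interior_of_subset)
    finally show "\<Inter>?B \<subseteq> N" .
  qed
  then have "NB a \<subseteq> \<Inter>\<A>" using a by (rule subset_trans[rotated])
  then have "NB a \<subseteq> X interior_of \<Inter>\<A>" using NB_open by (rule interior_of_maximal)
  then show "pp \<in> X interior_of \<Inter>\<A>" using pp_NB by (rule subsetD)
qed

lemma main: "\<exists>(X :: 'k set set topology) p.
           compactum X \<and> totally_disconnected_space X \<and>
           Nt_eq X (UNIV :: 'k set) \<and> P_point (UNIV :: 'k set) X p"
proof (intro exI conjI)
  show "compactum X" unfolding compactum_def using compact_X Hausdorff_X by simp
  show "totally_disconnected_space X" by (rule tdisc_X)
  show "P_point (UNIV::'k set) X pp" by (rule Ppoint)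
  show "Nt_eq X (UNIV::'k set)" unfolding Nt_eq_def
  proof (intro conjI allI impI)
    show "infinite (UNIV::'k set)" by (rule inf)
    show "has_op_like_base (UNIV::'k set) X" unfolding has_op_like_base_def
      using is_base_BB op_like_BB by blast
    fix M :: "'k set" assume H: "M \<subseteq> UNIV \<and> infinite M \<and> |M| <o |UNIV::'k set|"
    show "\<not> has_op_like_base M X"
    proof
      assume "has_op_like_base M X"
      then obtain B' where "is_base X B'" "op_like M B'" unfolding has_op_like_base_def by blast
      moreover have "|M| <o r" using H r_def by simp
      ultimately show False using no_small_base by blast
    qed
  qed
qed

end

theorem theorem3p38:
  assumes "regularCard |UNIV :: 'k set|"
    and "\<not> countable (UNIV :: 'k set)"
  shows "\<exists>(X :: 'k set set topology) p.
           compactum X \<and> totally_disconnected_space X \<and>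
           Nt_eq X (UNIV :: 'k set) \<and> P_point (UNIV :: 'k set) X p"
proof -
  interpret kappa "|UNIV :: 'k set|" by (unfold_locales) (use assms in auto)
  show ?thesis by (rule main)
qed

end
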